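(* Let $R>0$, let $(\beta_j)_{j\ge1}$ and $(\Gamma_n)_{n\ge0}$ be positive sequences, and let $(\mathbb{A}_{\boldsymbol\nu,\lambda})_{\boldsymbol\nu\in\mathcal I,\lambda\in\mathbb{N}_0}$ be a nonnegative sequence with $\mathbb{A}_{\boldsymbol\nu,0}=\delta_{\boldsymbol\nu,\mathbf 0}$, $\mathbb{A}_{\boldsymbol\nu,\lambda}=0$ for $\lambda>|\boldsymbol\nu|$, and otherwise $$\mathbb{A}_{\boldsymbol\nu+\mathbf e_j,\lambda}=R\sum_{\mathbf m\le\boldsymbol\nu}\binom{\boldsymbol\nu}{\mathbf m}\boldsymbol\beta^{\boldsymbol\nu-\mathbf m+\mathbf e_j}\,\Gamma_{|\boldsymbol\nu-\mathbf m|+1}\,\mathbb{A}_{\mathbf m,\lambda-1}\quad\text{for all }\boldsymbol\nu\in\mathcal I,\ j\ge1,\ 1\le\lambda\le|\boldsymbol\nu|+1.$$ Define $\mathbb{B}_{n,1}:=\Gamma_n$ for $n\ge1$ and $\mathbb{B}_{n,\lambda}:=\sum_{i=\lambda-1}^{n-1}\binom{n-1}{i}\Gamma_{n-i}\mathbb{B}_{i,\lambda-1}$ for $n\ge\lambda\ge2$. Then for all $\boldsymbol\nu\in\mathcal I$ with $\boldsymbol\nu\ne\mathbf 0$ and all $1\le\lambda\le|\boldsymbol\nu|$, $$\mathbb{A}_{\boldsymbol\nu,\lambda}=R^\lambda\,\boldsymbol\beta^{\boldsymbol\nu}\,\mathbb{B}_{|\boldsymbol\nu|,\lambda}.$$ Moreover,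 if the recursion holds with "$\le$" in place of "$=$" (with the same conditions $\mathbb{A}_{\boldsymbol\nu,0}=\delta_{\boldsymbol\nu,\mathbf0}$ and $\mathbb{A}_{\boldsymbol\nu,\lambda}=0$ for $\lambda>|\boldsymbol\nu|$), then $\mathbb{A}_{\boldsymbol\nu,\lambda}\le R^\lambda\boldsymbol\beta^{\boldsymbol\nu}\mathbb{B}_{|\boldsymbol\nu|,\lambda}$ for all such $\boldsymbol\nu,\lambda$.
   Context: $\mathcal I:=\{\boldsymbol\nu=(\nu_j)_{j\ge1}\in\mathbb{N}_0^\infty:|\boldsymbol\nu|:=\sum_j\nu_j<\infty\}$. $\mathbf e_j$ is the multiindex with $1$ in position $j$ and $0$ elsewhere; $\mathbf m\le\boldsymbol\nu$ means $m_j\le\nu_j$ for all $j$; $\binom{\boldsymbol\nu}{\mathbf m}=\prod_j\binom{\nu_j}{m_j}$; $\boldsymbol\beta^{\boldsymbol\nu}=\prod_j\beta_j^{\nu_j}$; $\delta_{\boldsymbol\nu,\mathbf0}$ is $1$ if $\boldsymbol\nu=\mathbf0$ and $0$ otherwise. *)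

theory Defs
  imports Complex_Main
begin

text \<open>Multiindices: finitely supported sequences indexed by j >= 1 (position 0 unused, forced to 0).\<close>
definition multiindices :: "(nat \<Rightarrow> nat) set" where
  "multiindices = {\<nu>. finite {j. \<nu> j \<noteq> 0} \<and> \<nu> 0 = 0}"

definition mabs :: "(nat \<Rightarrow> nat) \<Rightarrow> nat" where
  "mabs \<nu> = (\<Sum>j\<in>{j. \<nu> j \<noteq> 0}. \<nu> j)"

definition unitvec :: "nat \<Rightarrow> (nat \<Rightarrow> nat)" where
  "unitvec j = (\<lambda>i. if i = j then 1 else 0)"

definition mbinom :: "(nat \<Rightarrow> nat) \<Rightarrow> (nat \<Rightarrow> nat) \<Rightarrow> nat" where
  "mbinom \<nu> m = (\<Prod>j\<in>{j. \<nu> j \<noteq> 0}. \<nu> j choose m j)"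

definition mpow :: "(nat \<Rightarrow> real) \<Rightarrow> (nat \<Rightarrow> nat) \<Rightarrow> real" where
  "mpow \<beta> \<nu> = (\<Prod>j\<in>{j. \<nu> j \<noteq> 0}. \<beta> j ^ \<nu> j)"

text \<open>B_{n,lambda}: B_{n,1} = Gamma_n, B_{n,lambda} = sum_{i=lambda-1}^{n-1} binom(n-1,i) Gamma_{n-i} B_{i,lambda-1}.
  Value at lambda = 0 is an irrelevant filler.\<close>
fun BB :: "(nat \<Rightarrow> real) \<Rightarrow> nat \<Rightarrow> nat \<Rightarrow> real" where
  "BB G n 0 = 0"
| "BB G n (Suc 0) = G n"
| "BB G n (Suc (Suc k)) =
     (\<Sum>i = Suc k..n - 1. real (n - 1 choose i) * G (n - i) * BB G i (Suc k))"

definition rec_rhs :: "real \<Rightarrow> (nat \<Rightarrow> real) \<Rightarrow> (nat \<Rightarrow> real) \<Rightarrow> ((nat \<Rightarrow> nat) \<Rightarrow> nat \<Rightarrow> real)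
    \<Rightarrow> (nat \<Rightarrow> nat) \<Rightarrow> nat \<Rightarrow> nat \<Rightarrow> real" where
  "rec_rhs R \<beta> G A \<nu> j l =
     R * (\<Sum>m\<in>{m. m \<le> \<nu>}. real (mbinom \<nu> m) * mpow \<beta> (\<lambda>i. \<nu> i - m i + unitvec j i)
            * G (mabs (\<lambda>i. \<nu> i - m i) + 1) * A m (l - 1))"

end

theory Submission
  imports Defs
begin


definition TT :: "nat \<Rightarrow> (nat \<Rightarrow> real) \<Rightarrow> real" where
  "TT p f = (\<Sum>t\<le>p. real (p choose t) * f t)"

lemma TT_Suc: "TT (Suc p) f = TT p f + TT p (\<lambda>t. f (Suc t))"
proof -
  have a: "TT (Suc p) f = f 0 + (\<Sum>t\<le>p. real (p choose t) * f (Suc t))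
      + (\<Sum>t\<le>p. real (p choose Suc t) * f (Suc t))"
    unfolding TT_def by (subst sum.atMost_Suc_shift) (simp add: ring_distribs sum.distrib)
  have b: "(\<Sum>t\<le>Suc p. real (p choose t) * f t) = TT p f"
    unfolding TT_def by simp
  have c: "(\<Sum>t\<le>Suc p. real (p choose t) * f t) = f 0 + (\<Sum>t\<le>p. real (p choose Suc t) * f (Suc t))"
    by (subst sum.atMost_Suc_shift) simp
  have d: "TT p f = f 0 + (\<Sum>t\<le>p. real (p choose Suc t) * f (Suc t))" using b c by linarith
  show ?thesis unfolding a d by (simp add: TT_def)
qed

lemma TT_conv: "TT p (\<lambda>t. TT q (\<lambda>k. f (t + k))) = TT (p + q) f"
proof (induction p arbitrary: f)
  case 0
  then show ?case by (simp add: TT_def)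
next
  case (Suc p)
  have "TT (Suc p) (\<lambda>t. TT q (\<lambda>k. f (t + k))) =
     TT p (\<lambda>t. TT q (\<lambda>k. f (t + k))) + TT p (\<lambda>t. TT q (\<lambda>k. (\<lambda>x. f (Suc x)) (t + k)))"
    by (simp add: TT_Suc)
  also have "\<dots> = TT (p + q) f + TT (p + q) (\<lambda>x. f (Suc x))"
    using Suc.IH[of f] Suc.IH[of "\<lambda>x. f (Suc x)"] by simp
  also have "\<dots> = TT (Suc p + q) f" by (simp add: TT_Suc)
  finally show ?case .
qed

definition Box :: "nat set \<Rightarrow> (nat \<Rightarrow> nat) \<Rightarrow> (nat \<Rightarrow> nat) set" where
  "Box S \<nu> = {m. (\<forall>i\<in>S. m i \<le> \<nu> i) \<and> (\<forall>i. i \<notin> S \<longrightarrow> m i = 0)}"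

lemma Box_empty: "Box {} \<nu> = {\<lambda>_. 0}"
  by (auto simp: Box_def)

lemma Box_insert: "a \<notin> S \<Longrightarrow>
  Box (insert a S) \<nu> = (\<lambda>(t, m). m(a := t)) ` ({..\<nu> a} \<times> Box S \<nu>)"
proof (intro equalityI subsetI)
  fix x assume a: "a \<notin> S" and x: "x \<in> Box (insert a S) \<nu>"
  have "x = (x(a := 0))(a := x a)" by simp
  moreover have "(x a, x(a := 0)) \<in> {..\<nu> a} \<times> Box S \<nu>" using x a by (auto simp: Box_def)
  ultimately show "x \<in> (\<lambda>(t, m). m(a := t)) ` ({..\<nu> a} \<times> Box S \<nu>)"
    by (intro rev_image_eqI[of "(x a, x(a:=0))"]) auto
next
  fix x assume a: "a \<notin> S" and "x \<in> (\<lambda>(t, m). m(a := t)) ` ({..\<nu> a} \<times> Box S \<nu>)"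
  then show "x \<in> Box (insert a S) \<nu>" by (auto simp: Box_def)
qed

lemma Box_inj: "a \<notin> S \<Longrightarrow> inj_on (\<lambda>(t, m). m(a := t)) ({..\<nu> a} \<times> Box S \<nu>)"
proof (rule inj_onI, clarsimp)
  fix t m t' m' assume a: "a \<notin> S" and m: "m \<in> Box S \<nu>" "m' \<in> Box S \<nu>"
    and eq: "m(a := t) = m'(a := t')"
  have "t = t'" using fun_cong[OF eq, of a] by simp
  moreover have "m = m'"
  proof
    fix i show "m i = m' i"
    proof (cases "i = a")
      case True then show ?thesis using m a by (simp add: Box_def)
    next
      case False then show ?thesis using fun_cong[OF eq, of i] by simp
    qed
  qed
  ultimately show "t = t' \<and> m = m'" by simp
qed

lemma vander_Box:
  assumes "finite S"
  shows "(\<Sum>m\<in>Box S \<nu>. (\<Prod>i\<in>S. real (\<nu> i choose m i)) * f (\<Sum>i\<in>S. m i))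
         = TT (\<Sum>i\<in>S. \<nu> i) f"
  using assms
proof (induction S arbitrary: f rule: finite_induct)
  case empty
  then show ?case by (simp add: Box_empty TT_def)
next
  case (insert a S)
  let ?M = "\<Sum>i\<in>S. \<nu> i"
  have "(\<Sum>m\<in>Box (insert a S) \<nu>. (\<Prod>i\<in>insert a S. real (\<nu> i choose m i)) * f (\<Sum>i\<in>insert a S. m i))
     = (\<Sum>(t,m)\<in>{..\<nu> a} \<times> Box S \<nu>. (\<Prod>i\<in>insert a S. real (\<nu> i choose (m(a:=t)) i)) * f (\<Sum>i\<in>insert a S. (m(a:=t)) i))"
    unfolding Box_insert[OF insert.hyps(2)]
    by (subst sum.reindex[OF Box_inj[OF insert.hyps(2)]]) (simp add: case_prod_unfold)
  also have "\<dots> = (\<Sum>(t,m)\<in>{..\<nu> a} \<times> Box S \<nu>. real (\<nu> a choose t) * ((\<Prod>i\<in>S. real (\<nu> i choose m i)) * f (t + (\<Sum>i\<in>S. m i))))"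
  proof -
    have eq: "(\<Prod>i\<in>insert a S. real (\<nu> i choose (m(a:=t)) i)) * f (\<Sum>i\<in>insert a S. (m(a:=t)) i)
       = real (\<nu> a choose t) * ((\<Prod>i\<in>S. real (\<nu> i choose m i)) * f (t + (\<Sum>i\<in>S. m i)))" for t m
    proof -
      have p: "(\<Prod>i\<in>S. real (\<nu> i choose (m(a:=t)) i)) = (\<Prod>i\<in>S. real (\<nu> i choose m i))"
        by (rule prod.cong) (use insert.hyps(2) in auto)
      have s: "(\<Sum>i\<in>S. (m(a:=t)) i) = (\<Sum>i\<in>S. m i)"
        by (rule sum.cong) (use insert.hyps(2) in auto)
      show ?thesis using insert.hyps p s by simp
    qed
    show ?thesis by (rule sum.cong[OF refl]) (simp add: case_prod_unfold eq del: fun_upd_apply)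
  qed
  also have "\<dots> = (\<Sum>t\<le>\<nu> a. real (\<nu> a choose t) * (\<Sum>m\<in>Box S \<nu>. (\<Prod>i\<in>S. real (\<nu> i choose m i)) * f (t + (\<Sum>i\<in>S. m i))))"
    by (simp add: sum.cartesian_product[symmetric] sum_distrib_left)
  also have "\<dots> = TT (\<nu> a) (\<lambda>t. TT ?M (\<lambda>k. f (t + k)))"
    unfolding TT_def[of "\<nu> a"] using insert.IH[of "\<lambda>k. f (_ + k)"] by simp
  also have "\<dots> = TT (\<Sum>i\<in>insert a S. \<nu> i) f"
    using insert.hyps by (simp add: TT_conv)
  finally show ?case .
qed

lemma mi_finite: "\<nu> \<in> multiindices \<Longrightarrow> finite {j. \<nu> j \<noteq> 0}"
  by (simp add: multiindices_def)

lemma le_Box: "\<nu> \<in> multiindices \<Longrightarrow> {m. m \<le> \<nu>} = Box {j. \<nu> j \<noteq> 0} \<nu>"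
  unfolding Box_def le_fun_def by auto (metis le_zero_eq le_refl neq0_conv)+

lemma mabs_sub: "finite S \<Longrightarrow> {j. x j \<noteq> 0} \<subseteq> S \<Longrightarrow> mabs x = (\<Sum>i\<in>S. x i)"
  unfolding mabs_def by (rule sum.mono_neutral_left) auto

lemma mpow_sub: "finite S \<Longrightarrow> {j. x j \<noteq> 0} \<subseteq> S \<Longrightarrow> mpow \<beta> x = (\<Prod>i\<in>S. \<beta> i ^ x i)"
  unfolding mpow_def by (rule prod.mono_neutral_left) auto

lemma le_mi: "\<nu> \<in> multiindices \<Longrightarrow> m \<le> \<nu> \<Longrightarrow> m \<in> multiindices"
proof -
  assume a: "\<nu> \<in> multiindices" "m \<le> \<nu>"
  have "{j. m j \<noteq> 0} \<subseteq> {j. \<nu> j \<noteq> 0}" using a(2) by (auto simp: le_fun_def) (meson less_le_trans)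
  then show ?thesis using a by (auto simp: multiindices_def le_fun_def intro: finite_subset)
qed

lemma vander_multi:
  assumes "\<nu> \<in> multiindices"
  shows "(\<Sum>m\<in>{m. m \<le> \<nu>}. real (mbinom \<nu> m) * f (mabs m)) = TT (mabs \<nu>) f"
proof -
  let ?S = "{j. \<nu> j \<noteq> 0}"
  have fin: "finite ?S" using assms by (rule mi_finite)
  have "(\<Sum>m\<in>{m. m \<le> \<nu>}. real (mbinom \<nu> m) * f (mabs m))
     = (\<Sum>m\<in>Box ?S \<nu>. (\<Prod>i\<in>?S. real (\<nu> i choose m i)) * f (\<Sum>i\<in>?S. m i))"
    unfolding le_Box[OF assms]
  proof (rule sum.cong[OF refl])
    fix m assume m: "m \<in> Box ?S \<nu>"
    have "{j. m j \<noteq> 0} \<subseteq> ?S" using m by (auto simp: Box_def)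
    then have "mabs m = (\<Sum>i\<in>?S. m i)" using fin by (rule mabs_sub[rotated])
    then show "real (mbinom \<nu> m) * f (mabs m) = (\<Prod>i\<in>?S. real (\<nu> i choose m i)) * f (\<Sum>i\<in>?S. m i)"
      by (simp add: mbinom_def)
  qed
  also have "\<dots> = TT (mabs \<nu>) f" using vander_Box[OF fin] by (simp add: mabs_def)
  finally show ?thesis .
qed

lemma mi_add_unit: "\<nu> \<in> multiindices \<Longrightarrow> j \<ge> 1 \<Longrightarrow> (\<lambda>i. \<nu> i + unitvec j i) \<in> multiindices"
proof -
  assume a: "\<nu> \<in> multiindices" "j \<ge> 1"
  have "{i. \<nu> i + unitvec j i \<noteq> 0} \<subseteq> insert j {i. \<nu> i \<noteq> 0}" by (auto simp: unitvec_def)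
  then show ?thesis using a by (auto simp: multiindices_def unitvec_def intro: finite_subset)
qed

lemma mabs_add_unit: "\<nu> \<in> multiindices \<Longrightarrow> mabs (\<lambda>i. \<nu> i + unitvec j i) = mabs \<nu> + 1"
proof -
  assume a: "\<nu> \<in> multiindices"
  let ?S = "insert j {i. \<nu> i \<noteq> 0}"
  have fin: "finite ?S" using mi_finite[OF a(1)] by simp
  have "mabs (\<lambda>i. \<nu> i + unitvec j i) = (\<Sum>i\<in>?S. \<nu> i + unitvec j i)"
    by (rule mabs_sub[OF fin]) (auto simp: unitvec_def)
  also have "\<dots> = (\<Sum>i\<in>?S. \<nu> i) + (\<Sum>i\<in>?S. unitvec j i)" by (simp add: sum.distrib)
  also have "(\<Sum>i\<in>?S. \<nu> i) = mabs \<nu>" by (rule mabs_sub[OF fin, symmetric]) auto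
  also have "(\<Sum>i\<in>?S. unitvec j i) = 1"
    using fin by (simp add: unitvec_def sum.delta)
  finally show ?thesis .
qed

lemma mabs_diff: "\<nu> \<in> multiindices \<Longrightarrow> m \<le> \<nu> \<Longrightarrow> mabs (\<lambda>i. \<nu> i - m i) = mabs \<nu> - mabs m \<and> mabs m \<le> mabs \<nu>"
proof -
  assume a: "\<nu> \<in> multiindices" "m \<le> \<nu>"
  let ?S = "{i. \<nu> i \<noteq> 0}"
  have fin: "finite ?S" using mi_finite[OF a(1)] by simp
  have le: "\<And>i. m i \<le> \<nu> i" using a(2) by (simp add: le_fun_def)
  have e1: "mabs (\<lambda>i. \<nu> i - m i) = (\<Sum>i\<in>?S. \<nu> i - m i)" by (rule mabs_sub[OF fin]) auto
  have e2: "mabs m = (\<Sum>i\<in>?S. m i)" by (rule mabs_sub[OF fin]) (use le in \<open>auto intro: less_le_trans\<close>)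
  have e3: "mabs \<nu> = (\<Sum>i\<in>?S. \<nu> i)" by (rule mabs_sub[OF fin]) auto
  have "(\<Sum>i\<in>?S. \<nu> i - m i) + (\<Sum>i\<in>?S. m i) = (\<Sum>i\<in>?S. \<nu> i)"
    by (simp add: sum.distrib[symmetric] le)
  then show ?thesis using e1 e2 e3 by linarith
qed

lemma mpow_split:
  assumes "\<nu> \<in> multiindices" "m \<le> \<nu>"
  shows "mpow \<beta> (\<lambda>i. \<nu> i - m i + unitvec j i) * mpow \<beta> m = mpow \<beta> (\<lambda>i. \<nu> i + unitvec j i)"
proof -
  let ?S = "insert j {i. \<nu> i \<noteq> 0}"
  have fin: "finite ?S" using mi_finite[OF assms(1)] by simp
  have le: "\<And>i. m i \<le> \<nu> i" using assms(2) by (simp add: le_fun_def)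
  have e1: "mpow \<beta> (\<lambda>i. \<nu> i - m i + unitvec j i) = (\<Prod>i\<in>?S. \<beta> i ^ (\<nu> i - m i + unitvec j i))"
    by (rule mpow_sub[OF fin]) (auto simp: unitvec_def)
  have e2: "mpow \<beta> m = (\<Prod>i\<in>?S. \<beta> i ^ m i)"
    by (rule mpow_sub[OF fin]) (use le in \<open>auto intro: less_le_trans\<close>)
  have e3: "mpow \<beta> (\<lambda>i. \<nu> i + unitvec j i) = (\<Prod>i\<in>?S. \<beta> i ^ (\<nu> i + unitvec j i))"
    by (rule mpow_sub[OF fin]) (auto simp: unitvec_def)
  have "(\<Prod>i\<in>?S. \<beta> i ^ (\<nu> i - m i + unitvec j i)) * (\<Prod>i\<in>?S. \<beta> i ^ m i)
      = (\<Prod>i\<in>?S. \<beta> i ^ (\<nu> i + unitvec j i))"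
  proof -
    have h: "\<nu> x - m x + unitvec j x + m x = \<nu> x + unitvec j x" for x using le[of x] by arith
    show ?thesis unfolding prod.distrib[symmetric] power_add[symmetric] h ..
  qed
  then show ?thesis using e1 e2 e3 by simp
qed

lemma mpow_nonneg: "x 0 = 0 \<Longrightarrow> (\<And>j. j \<ge> 1 \<Longrightarrow> \<beta> j > 0) \<Longrightarrow> mpow \<beta> x \<ge> 0"
  unfolding mpow_def
  by (rule prod_nonneg) (metis (mono_tags) less_imp_le mem_Collect_eq less_one not_less zero_less_power)

definition EE :: "real \<Rightarrow> (nat \<Rightarrow> real) \<Rightarrow> (nat \<Rightarrow> real) \<Rightarrow> (nat \<Rightarrow> nat) \<Rightarrow> nat \<Rightarrow> real" where
  "EE R \<beta> G m k = R ^ k * mpow \<beta> m * BB G (mabs m) k"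

definition AA :: "real \<Rightarrow> (nat \<Rightarrow> real) \<Rightarrow> (nat \<Rightarrow> real) \<Rightarrow> (nat \<Rightarrow> nat) \<Rightarrow> nat \<Rightarrow> real" where
  "AA R \<beta> G m k = (if k = 0 then (if m = (\<lambda>_. 0) then 1 else 0)
      else if k \<le> mabs m then EE R \<beta> G m k else 0)"

lemma finite_le: "\<nu> \<in> multiindices \<Longrightarrow> finite {m. m \<le> \<nu>}"
proof -
  assume a: "\<nu> \<in> multiindices"
  let ?S = "{j. \<nu> j \<noteq> 0}"
  have fin: "finite ?S" using a by (rule mi_finite)
  have "finite {m. \<forall>x. (x \<in> ?S \<longrightarrow> m x \<in> {..(\<Sum>i\<in>?S. \<nu> i)}) \<and> (x \<notin> ?S \<longrightarrow> m x = 0)}"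
    by (rule finite_set_of_finite_funs) (use fin in auto)
  moreover have "{m. m \<le> \<nu>} \<subseteq> {m. \<forall>x. (x \<in> ?S \<longrightarrow> m x \<in> {..(\<Sum>i\<in>?S. \<nu> i)}) \<and> (x \<notin> ?S \<longrightarrow> m x = 0)}"
  proof
    fix m assume "m \<in> {m. m \<le> \<nu>}"
    then have le: "\<And>x. m x \<le> \<nu> x" by (simp add: le_fun_def)
    have "m x \<le> (\<Sum>i\<in>?S. \<nu> i)" if "\<nu> x \<noteq> 0" for x
    proof -
      have "\<nu> x \<le> (\<Sum>i\<in>?S. \<nu> i)" using fin that by (intro member_le_sum) auto
      then show ?thesis using le[of x] by simp
    qed
    moreover have "m x = 0" if "\<nu> x = 0" for x using le[of x] that by simp
    ultimately show "m \<in> {m. \<forall>x. (x \<in> ?S \<longrightarrow> m x \<in> {..(\<Sum>i\<in>?S. \<nu> i)}) \<and> (x \<notin> ?S \<longrightarrow> m x = 0)}"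
      by blast
  qed
  ultimately show ?thesis by (rule finite_subset[rotated])
qed

lemma key:
  assumes \<nu>: "\<nu> \<in> multiindices" and l: "1 \<le> l" "l \<le> mabs \<nu> + 1"
  shows "rec_rhs R \<beta> G (AA R \<beta> G) \<nu> j l = EE R \<beta> G (\<lambda>i. \<nu> i + unitvec j i) l"
proof -
  define c where "c m = real (mbinom \<nu> m) * mpow \<beta> (\<lambda>i. \<nu> i - m i + unitvec j i)
      * G (mabs (\<lambda>i. \<nu> i - m i) + 1)" for m
  have rr: "rec_rhs R \<beta> G (AA R \<beta> G) \<nu> j l = R * (\<Sum>m\<in>{m. m \<le> \<nu>}. c m * AA R \<beta> G m (l - 1))"
    by (simp add: rec_rhs_def c_def)
  have ma: "mabs (\<lambda>i. \<nu> i + unitvec j i) = mabs \<nu> + 1" using \<nu> by (rule mabs_add_unit)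
  obtain l' where l': "l = Suc l'" using l by (cases l) auto
  show ?thesis
  proof (cases l')
    case 0
    have "(\<Sum>m\<in>{m. m \<le> \<nu>}. c m * AA R \<beta> G m (l - 1)) = (\<Sum>m\<in>{m. m \<le> \<nu>}. if m = (\<lambda>_. 0) then c m else 0)"
      by (rule sum.cong) (auto simp: AA_def l' 0)
    also have "\<dots> = c (\<lambda>_. 0)" using finite_le[OF \<nu>] by (simp add: sum.delta le_fun_def)
    also have "\<dots> = mpow \<beta> (\<lambda>i. \<nu> i + unitvec j i) * G (mabs \<nu> + 1)"
      by (simp add: c_def mbinom_def)
    finally show ?thesis unfolding rr by (simp add: EE_def l' 0 ma)
  next
    case (Suc k)
    let ?N = "mabs \<nu>"
    define g where "g i = G (?N - i + 1) * (if Suc k \<le> i then BB G i (Suc k) else 0)" for i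
    have kN: "Suc k \<le> ?N" using l l' Suc by simp
    have "(\<Sum>m\<in>{m. m \<le> \<nu>}. c m * AA R \<beta> G m (l - 1))
        = (\<Sum>m\<in>{m. m \<le> \<nu>}. R ^ Suc k * mpow \<beta> (\<lambda>i. \<nu> i + unitvec j i) * (real (mbinom \<nu> m) * g (mabs m)))"
    proof (rule sum.cong[OF refl])
      fix m assume "m \<in> {m. m \<le> \<nu>}"
      then have m: "m \<le> \<nu>" by simp
      have sp: "mpow \<beta> (\<lambda>i. \<nu> i - m i + unitvec j i) * mpow \<beta> m = mpow \<beta> (\<lambda>i. \<nu> i + unitvec j i)"
        using \<nu> m by (rule mpow_split)
      have md: "mabs (\<lambda>i. \<nu> i - m i) = ?N - mabs m" using mabs_diff[OF \<nu> m] by simp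
      show "c m * AA R \<beta> G m (l - 1) = R ^ Suc k * mpow \<beta> (\<lambda>i. \<nu> i + unitvec j i) * (real (mbinom \<nu> m) * g (mabs m))"
      proof (cases "Suc k \<le> mabs m")
        case True
        have "c m * AA R \<beta> G m (l - 1) = real (mbinom \<nu> m) * (mpow \<beta> (\<lambda>i. \<nu> i - m i + unitvec j i) * mpow \<beta> m)
           * G (?N - mabs m + 1) * R ^ Suc k * BB G (mabs m) (Suc k)"
          using True by (simp add: c_def AA_def EE_def l' Suc md)
        then show ?thesis unfolding sp using True by (simp add: g_def)
      next
        case False
        then show ?thesis by (simp add: c_def AA_def l' Suc g_def)
      qed
    qed
    also have "\<dots> = R ^ Suc k * mpow \<beta> (\<lambda>i. \<nu> i + unitvec j i) * TT ?N g"
      by (simp add: sum_distrib_left[symmetric] vander_multi[OF \<nu>])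
    also have "TT ?N g = BB G (?N + 1) (Suc (Suc k))"
    proof -
      have "TT ?N g = (\<Sum>i = Suc k..?N. real (?N choose i) * G (Suc ?N - i) * BB G i (Suc k))"
        unfolding TT_def
        by (rule sum.mono_neutral_cong_right) (auto simp: g_def Suc_diff_le)
      then show ?thesis by simp
    qed
    finally show ?thesis unfolding rr by (simp add: EE_def l' Suc ma)
  qed
qed


lemma decomp:
  assumes "\<nu> \<in> multiindices" "mabs \<nu> \<ge> 1"
  obtains \<nu>' j where "\<nu>' \<in> multiindices" "j \<ge> 1" "\<nu> = (\<lambda>i. \<nu>' i + unitvec j i)"
proof -
  have "\<nu> \<noteq> (\<lambda>_. 0)" using assms(2) by (auto simp: mabs_def)
  then obtain j where j: "\<nu> j \<noteq> 0" by auto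
  have j1: "j \<ge> 1" using j assms(1) by (cases j) (auto simp: multiindices_def)
  define \<nu>' where "\<nu>' = (\<lambda>i. \<nu> i - unitvec j i)"
  have "\<nu>' \<le> \<nu>" by (simp add: \<nu>'_def le_fun_def)
  then have "\<nu>' \<in> multiindices" using assms(1) le_mi by blast
  moreover have "\<nu> = (\<lambda>i. \<nu>' i + unitvec j i)" using j by (auto simp: \<nu>'_def unitvec_def)
  ultimately show ?thesis using that j1 by blast
qed

lemma coef_nonneg:
  assumes \<nu>: "\<nu> \<in> multiindices" and j: "j \<ge> 1" and \<beta>: "\<And>j. j \<ge> 1 \<Longrightarrow> \<beta> j > 0"
    and G: "\<And>n. G n > 0"
  shows "0 \<le> real (mbinom \<nu> m) * mpow \<beta> (\<lambda>i. \<nu> i - m i + unitvec j i) * G (mabs (\<lambda>i. \<nu> i - m i) + 1)"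
proof -
  have "\<nu> 0 = 0" using \<nu> by (simp add: multiindices_def)
  then have "mpow \<beta> (\<lambda>i. \<nu> i - m i + unitvec j i) \<ge> 0"
    using j by (intro mpow_nonneg \<beta>) (auto simp: unitvec_def)
  then show ?thesis using G by (intro mult_nonneg_nonneg) (auto intro: less_imp_le)
qed

lemma rec_mono:
  assumes \<nu>: "\<nu> \<in> multiindices" and j: "j \<ge> 1" and \<beta>: "\<And>j. j \<ge> 1 \<Longrightarrow> \<beta> j > 0"
    and G: "\<And>n. G n > 0" and R: "R > 0"
    and le: "\<And>m. m \<le> \<nu> \<Longrightarrow> A m (l - 1) \<le> A2 m (l - 1)"
  shows "rec_rhs R \<beta> G A \<nu> j l \<le> rec_rhs R \<beta> G A2 \<nu> j l"
proof -
  have "(\<Sum>m\<in>{m. m \<le> \<nu>}. real (mbinom \<nu> m) * mpow \<beta> (\<lambda>i. \<nu> i - m i + unitvec j i)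
            * G (mabs (\<lambda>i. \<nu> i - m i) + 1) * A m (l - 1))
     \<le> (\<Sum>m\<in>{m. m \<le> \<nu>}. real (mbinom \<nu> m) * mpow \<beta> (\<lambda>i. \<nu> i - m i + unitvec j i)
            * G (mabs (\<lambda>i. \<nu> i - m i) + 1) * A2 m (l - 1))"
  proof (rule sum_mono)
    fix m assume "m \<in> {m. m \<le> \<nu>}"
    then have "A m (l - 1) \<le> A2 m (l - 1)" using le by simp
    then show "real (mbinom \<nu> m) * mpow \<beta> (\<lambda>i. \<nu> i - m i + unitvec j i)
            * G (mabs (\<lambda>i. \<nu> i - m i) + 1) * A m (l - 1) \<le> real (mbinom \<nu> m) * mpow \<beta> (\<lambda>i. \<nu> i - m i + unitvec j i)
            * G (mabs (\<lambda>i. \<nu> i - m i) + 1) * A2 m (l - 1)"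
      by (rule mult_left_mono[OF _ coef_nonneg[OF \<nu> j \<beta> G]])
  qed
  then show ?thesis unfolding rec_rhs_def using R by (simp add: mult_left_mono)
qed

lemma rec_cong:
  assumes eq: "\<And>m. m \<le> \<nu> \<Longrightarrow> A m (l - 1) = A2 m (l - 1)"
  shows "rec_rhs R \<beta> G A \<nu> j l = rec_rhs R \<beta> G A2 \<nu> j l"
  unfolding rec_rhs_def using eq by (intro arg_cong[where f="(*) R"] sum.cong) auto

lemma main_le:
  assumes R: "R > 0" and \<beta>: "\<And>j. j \<ge> 1 \<Longrightarrow> \<beta> j > 0" and G: "\<And>n. G n > 0"
    and A0: "\<And>\<nu>. \<nu> \<in> multiindices \<Longrightarrow> A \<nu> 0 = (if \<nu> = (\<lambda>_. 0) then 1 else 0)"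
    and Abig: "\<And>\<nu> l. \<nu> \<in> multiindices \<Longrightarrow> l > mabs \<nu> \<Longrightarrow> A \<nu> l = 0"
    and rec: "\<forall>\<nu>\<in>multiindices. \<forall>j\<ge>1. \<forall>l. 1 \<le> l \<and> l \<le> mabs \<nu> + 1 \<longrightarrow>
              A (\<lambda>i. \<nu> i + unitvec j i) l \<le> rec_rhs R \<beta> G A \<nu> j l"
  shows "\<nu> \<in> multiindices \<Longrightarrow> 1 \<le> l \<Longrightarrow> l \<le> mabs \<nu> \<Longrightarrow> A \<nu> l \<le> EE R \<beta> G \<nu> l"
proof (induction "mabs \<nu>" arbitrary: \<nu> l rule: less_induct)
  case less
  obtain \<nu>' j where \<nu>': "\<nu>' \<in> multiindices" "j \<ge> 1" "\<nu> = (\<lambda>i. \<nu>' i + unitvec j i)"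
  proof -
    have "mabs \<nu> \<ge> 1" using less.prems by simp
    from decomp[OF less.prems(1) this] show ?thesis using that by blast
  qed
  have ma: "mabs \<nu> = mabs \<nu>' + 1" using \<nu>' mabs_add_unit by blast
  have cmp: "A m (l - 1) \<le> AA R \<beta> G m (l - 1)" if m: "m \<le> \<nu>'" for m
  proof -
    have mm: "m \<in> multiindices" using le_mi[OF \<nu>'(1) m] .
    have mle: "mabs m \<le> mabs \<nu>'" using mabs_diff[OF \<nu>'(1) m] by simp
    show ?thesis
    proof (cases "l - 1 = 0")
      case True then show ?thesis using A0[OF mm] by (simp add: AA_def)
    next
      case False
      show ?thesis
      proof (cases "l - 1 \<le> mabs m")
        case True
        have "A m (l - 1) \<le> EE R \<beta> G m (l - 1)"
          using less.hyps[of m "l - 1"] mle ma mm False True by linarith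
        then show ?thesis using False True by (simp add: AA_def)
      next
        case F2: False
        then show ?thesis using Abig[OF mm, of "l - 1"] False by (simp add: AA_def)
      qed
    qed
  qed
  have "A \<nu> l \<le> rec_rhs R \<beta> G A \<nu>' j l"
  proof -
    have "1 \<le> l \<and> l \<le> mabs \<nu>' + 1" using less.prems ma by simp
    then have "A (\<lambda>i. \<nu>' i + unitvec j i) l \<le> rec_rhs R \<beta> G A \<nu>' j l"
      using rec \<nu>'(1,2) by blast
    then show ?thesis using \<nu>'(3) by simp
  qed
  also have "\<dots> \<le> rec_rhs R \<beta> G (AA R \<beta> G) \<nu>' j l"
    by (rule rec_mono[OF \<nu>'(1,2)]) (use \<beta> G R cmp in auto)
  also have "\<dots> = EE R \<beta> G \<nu> l"
    using key[OF \<nu>'(1), of l] less.prems ma \<nu>'(3) by simp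
  finally show ?case .
qed

lemma main_eq:
  assumes A0: "\<And>\<nu>. \<nu> \<in> multiindices \<Longrightarrow> A \<nu> 0 = (if \<nu> = (\<lambda>_. 0) then 1 else 0)"
    and Abig: "\<And>\<nu> l. \<nu> \<in> multiindices \<Longrightarrow> l > mabs \<nu> \<Longrightarrow> A \<nu> l = 0"
    and rec: "\<forall>\<nu>\<in>multiindices. \<forall>j\<ge>1. \<forall>l. 1 \<le> l \<and> l \<le> mabs \<nu> + 1 \<longrightarrow>
              A (\<lambda>i. \<nu> i + unitvec j i) l = rec_rhs R \<beta> G A \<nu> j l"
  shows "\<nu> \<in> multiindices \<Longrightarrow> 1 \<le> l \<Longrightarrow> l \<le> mabs \<nu> \<Longrightarrow> A \<nu> l = EE R \<beta> G \<nu> l"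
proof (induction "mabs \<nu>" arbitrary: \<nu> l rule: less_induct)
  case less
  obtain \<nu>' j where \<nu>': "\<nu>' \<in> multiindices" "j \<ge> 1" "\<nu> = (\<lambda>i. \<nu>' i + unitvec j i)"
  proof -
    have "mabs \<nu> \<ge> 1" using less.prems by simp
    from decomp[OF less.prems(1) this] show ?thesis using that by blast
  qed
  have ma: "mabs \<nu> = mabs \<nu>' + 1" using \<nu>' mabs_add_unit by blast
  have cmp: "A m (l - 1) = AA R \<beta> G m (l - 1)" if m: "m \<le> \<nu>'" for m
  proof -
    have mm: "m \<in> multiindices" using le_mi[OF \<nu>'(1) m] .
    have mle: "mabs m \<le> mabs \<nu>'" using mabs_diff[OF \<nu>'(1) m] by simp
    show ?thesis
    proof (cases "l - 1 = 0")
      case True then show ?thesis using A0[OF mm] by (simp add: AA_def)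
    next
      case False
      show ?thesis
      proof (cases "l - 1 \<le> mabs m")
        case True
        have "A m (l - 1) = EE R \<beta> G m (l - 1)"
          using less.hyps[of m "l - 1"] mle ma mm False True by linarith
        then show ?thesis using False True by (simp add: AA_def)
      next
        case F2: False
        then show ?thesis using Abig[OF mm, of "l - 1"] False by (simp add: AA_def)
      qed
    qed
  qed
  have "A \<nu> l = rec_rhs R \<beta> G A \<nu>' j l"
  proof -
    have "1 \<le> l \<and> l \<le> mabs \<nu>' + 1" using less.prems ma by simp
    then have "A (\<lambda>i. \<nu>' i + unitvec j i) l = rec_rhs R \<beta> G A \<nu>' j l"
      using rec \<nu>'(1,2) by blast
    then show ?thesis using \<nu>'(3) by simp
  qed
  also have "\<dots> = rec_rhs R \<beta> G (AA R \<beta> G) \<nu>' j l"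
    by (rule rec_cong) (rule cmp)
  also have "\<dots> = EE R \<beta> G \<nu> l"
    using key[OF \<nu>'(1), of l] less.prems ma \<nu>'(3) by simp
  finally show ?case .
qed

theorem lemma6p1:
  fixes R :: real and \<beta> :: "nat \<Rightarrow> real" and G :: "nat \<Rightarrow> real"
    and A :: "(nat \<Rightarrow> nat) \<Rightarrow> nat \<Rightarrow> real"
  assumes R: "R > 0"
    and \<beta>: "\<And>j. j \<ge> 1 \<Longrightarrow> \<beta> j > 0"
    and G: "\<And>n. G n > 0"
    and A_nonneg: "\<And>\<nu> l. \<nu> \<in> multiindices \<Longrightarrow> A \<nu> l \<ge> 0"
    and A0: "\<And>\<nu>. \<nu> \<in> multiindices \<Longrightarrow> A \<nu> 0 = (if \<nu> = (\<lambda>_. 0) then 1 else 0)"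
    and Abig: "\<And>\<nu> l. \<nu> \<in> multiindices \<Longrightarrow> l > mabs \<nu> \<Longrightarrow> A \<nu> l = 0"
  shows "((\<forall>\<nu>\<in>multiindices. \<forall>j\<ge>1. \<forall>l. 1 \<le> l \<and> l \<le> mabs \<nu> + 1 \<longrightarrow>
              A (\<lambda>i. \<nu> i + unitvec j i) l = rec_rhs R \<beta> G A \<nu> j l)
          \<longrightarrow> (\<forall>\<nu>\<in>multiindices. \<nu> \<noteq> (\<lambda>_. 0) \<longrightarrow> (\<forall>l. 1 \<le> l \<and> l \<le> mabs \<nu> \<longrightarrow>
              A \<nu> l = R ^ l * mpow \<beta> \<nu> * BB G (mabs \<nu>) l)))
       \<and> ((\<forall>\<nu>\<in>multiindices. \<forall>j\<ge>1. \<forall>l. 1 \<le> l \<and> l \<le> mabs \<nu> + 1 \<longrightarrow>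
              A (\<lambda>i. \<nu> i + unitvec j i) l \<le> rec_rhs R \<beta> G A \<nu> j l)
          \<longrightarrow> (\<forall>\<nu>\<in>multiindices. \<nu> \<noteq> (\<lambda>_. 0) \<longrightarrow> (\<forall>l. 1 \<le> l \<and> l \<le> mabs \<nu> \<longrightarrow>
              A \<nu> l \<le> R ^ l * mpow \<beta> \<nu> * BB G (mabs \<nu>) l)))"
proof (intro conjI impI)
  assume rec: "\<forall>\<nu>\<in>multiindices. \<forall>j\<ge>1. \<forall>l. 1 \<le> l \<and> l \<le> mabs \<nu> + 1 \<longrightarrow>
              A (\<lambda>i. \<nu> i + unitvec j i) l = rec_rhs R \<beta> G A \<nu> j l"
  show "\<forall>\<nu>\<in>multiindices. \<nu> \<noteq> (\<lambda>_. 0) \<longrightarrow> (\<forall>l. 1 \<le> l \<and> l \<le> mabs \<nu> \<longrightarrow>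
              A \<nu> l = R ^ l * mpow \<beta> \<nu> * BB G (mabs \<nu>) l)"
  proof (intro ballI impI allI)
    fix \<nu> l assume "\<nu> \<in> multiindices" "\<nu> \<noteq> (\<lambda>_. 0)" "1 \<le> l \<and> l \<le> mabs \<nu>"
    then show "A \<nu> l = R ^ l * mpow \<beta> \<nu> * BB G (mabs \<nu>) l"
      using main_eq[OF A0 Abig rec, of \<nu> l] unfolding EE_def by blast
  qed
next
  assume rec: "\<forall>\<nu>\<in>multiindices. \<forall>j\<ge>1. \<forall>l. 1 \<le> l \<and> l \<le> mabs \<nu> + 1 \<longrightarrow>
              A (\<lambda>i. \<nu> i + unitvec j i) l \<le> rec_rhs R \<beta> G A \<nu> j l"
  show "\<forall>\<nu>\<in>multiindices. \<nu> \<noteq> (\<lambda>_. 0) \<longrightarrow> (\<forall>l. 1 \<le> l \<and> l \<le> mabs \<nu> \<longrightarrow>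
              A \<nu> l \<le> R ^ l * mpow \<beta> \<nu> * BB G (mabs \<nu>) l)"
  proof (intro ballI impI allI)
    fix \<nu> l assume "\<nu> \<in> multiindices" "\<nu> \<noteq> (\<lambda>_. 0)" "1 \<le> l \<and> l \<le> mabs \<nu>"
    then show "A \<nu> l \<le> R ^ l * mpow \<beta> \<nu> * BB G (mabs \<nu>) l"
      using main_le[OF R \<beta> G A0 Abig rec, of \<nu> l] unfolding EE_def by blast
  qed
qed

end
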